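(* Let $X$ be a uniformly discrete metric space of bounded geometry which has property A. Then $\inf_{S>0}\epsilon_{X;1}(S)=0$.
   Context: A metric space is uniformly discrete if there is $r>0$ such that $d(x,y)<r$ implies $x=y$. For a metric space $(X,d)$ and $1\le p<\infty$, $\ell^p(X)$ is the space of $p$-summable real functions on $X$ and $\ell^p_1(X)$ its unit sphere. For a map $\xi\colon X\to\ell^p(X)$, written $x\mapsto\xi_x$, put $S(\xi)=\sup\{d(x,y):\xi_x(y)\neq0\}$ and $\varepsilon(\xi;p)=\sup_{x\ne y}\|\xi_x-\xi_y\|_p/d(x,y)$. The profile is $\epsilon_{X;p}(S)=\inf\{\varepsilon(\xi;p):\xi\colon X\to\ell^p_1(X),\ S(\xi)\le S\}$. A metric space has bounded geometry if for every $R$ there is $C$ such that every $R$-ball has at most $C$ points. A discrete metric space $X$ of bounded geometry has property A if for every $R>0$ and $\epsilon>0$ there is $\xi\colon X\to\ell^1_1(X)$ with $S(\xi)<\infty$ and $\|\xi_x-\xi_y\|_1\le\epsilon$ whenever $d(x,y)\le R$. *)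

theory Defs
  imports "HOL-Analysis.Analysis"
begin

text \<open>The metric space X is the whole carrier type 'a of class metric_space, with d = dist.\<close>

definition uniformly_discrete :: "'a::metric_space itself \<Rightarrow> bool" where
  "uniformly_discrete _ \<longleftrightarrow> (\<exists>r>0. \<forall>x y::'a. dist x y < r \<longrightarrow> x = y)"

definition bounded_geometry :: "'a::metric_space itself \<Rightarrow> bool" where
  "bounded_geometry _ \<longleftrightarrow>
     (\<forall>R. \<exists>C::nat. \<forall>x::'a. finite (cball x R) \<and> card (cball x R) \<le> C)"

definition in_lp :: "real \<Rightarrow> ('a \<Rightarrow> real) \<Rightarrow> bool" where
  "in_lp p f \<longleftrightarrow> (\<lambda>y. \<bar>f y\<bar> powr p) summable_on UNIV"

definition lp_norm :: "real \<Rightarrow> ('a \<Rightarrow> real) \<Rightarrow> real" where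
  "lp_norm p f = (\<Sum>\<^sub>\<infinity>y. \<bar>f y\<bar> powr p) powr (1 / p)"

definition lp_sphere :: "real \<Rightarrow> ('a \<Rightarrow> real) set" where
  "lp_sphere p = {f. in_lp p f \<and> lp_norm p f = 1}"

definition support_within :: "('a::metric_space \<Rightarrow> 'a \<Rightarrow> real) \<Rightarrow> real \<Rightarrow> bool" where
  "support_within \<xi> S \<longleftrightarrow> (\<forall>x y. \<xi> x y \<noteq> 0 \<longrightarrow> dist x y \<le> S)"

text \<open>epsilon(xi;p) = sup over x \<noteq> y of ||xi_x - xi_y||_p / d(x,y), valued in extended reals
  (0 when X has a single point; all quotients are nonnegative).\<close>

definition eps_xi :: "real \<Rightarrow> ('a::metric_space \<Rightarrow> 'a \<Rightarrow> real) \<Rightarrow> ereal" where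
  "eps_xi p \<xi> = Sup (insert 0
     {ereal (lp_norm p (\<lambda>z. \<xi> x z - \<xi> y z) / dist x y) | x y. x \<noteq> y})"

definition profile :: "'a::metric_space itself \<Rightarrow> real \<Rightarrow> real \<Rightarrow> ereal" where
  "profile _ p S = Inf {eps_xi p \<xi> | \<xi> :: 'a \<Rightarrow> 'a \<Rightarrow> real.
       (\<forall>x. \<xi> x \<in> lp_sphere p) \<and> support_within \<xi> S}"

definition property_A :: "'a::metric_space itself \<Rightarrow> bool" where
  "property_A _ \<longleftrightarrow> (\<forall>R>0. \<forall>e>0. \<exists>\<xi> :: 'a \<Rightarrow> 'a \<Rightarrow> real.
       (\<forall>x. \<xi> x \<in> lp_sphere 1) \<and> (\<exists>S. support_within \<xi> S) \<and>
       (\<forall>x y. dist x y \<le> R \<longrightarrow> lp_norm 1 (\<lambda>z. \<xi> x z - \<xi> y z) \<le> e))"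

end

theory Submission
  imports Defs
begin

lemma lp1_eq: "lp_norm 1 h = (\<Sum>\<^sub>\<infinity>y. \<bar>h y\<bar>)"
  unfolding lp_norm_def by (simp add: infsum_nonneg)

lemma in_lp1: "in_lp 1 h \<longleftrightarrow> (\<lambda>y. \<bar>h y\<bar>) summable_on UNIV"
  unfolding in_lp_def by simp

lemma diff_le2:
  assumes "f \<in> lp_sphere 1" "g \<in> lp_sphere 1"
  shows "lp_norm 1 (\<lambda>z. f z - g z) \<le> 2"
proof -
  have sf: "(\<lambda>y. \<bar>f y\<bar>) summable_on UNIV" and nf: "(\<Sum>\<^sub>\<infinity>y. \<bar>f y\<bar>) = 1"
    using assms(1) by (auto simp: lp_sphere_def in_lp1 lp1_eq)
  have sg: "(\<lambda>y. \<bar>g y\<bar>) summable_on UNIV" and ng: "(\<Sum>\<^sub>\<infinity>y. \<bar>g y\<bar>) = 1"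
    using assms(2) by (auto simp: lp_sphere_def in_lp1 lp1_eq)
  have sfg: "(\<lambda>y. \<bar>f y\<bar> + \<bar>g y\<bar>) summable_on UNIV"
    using summable_on_add[OF sf sg] .
  have sd: "(\<lambda>y. \<bar>f y - g y\<bar>) summable_on UNIV"
    by (rule summable_on_comparison_test[OF sfg]) auto
  have "(\<Sum>\<^sub>\<infinity>y. \<bar>f y - g y\<bar>) \<le> (\<Sum>\<^sub>\<infinity>y. \<bar>f y\<bar> + \<bar>g y\<bar>)"
    by (rule infsum_mono[OF sd sfg]) auto
  also have "\<dots> = 2" using infsum_add[OF sf sg] nf ng by simp
  finally show ?thesis by (simp add: lp1_eq)
qed

lemma support_mono: "support_within \<xi> S \<Longrightarrow> S \<le> T \<Longrightarrow> support_within \<xi> T"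
  unfolding support_within_def by force

lemma eps_nonneg: "0 \<le> eps_xi p \<xi>"
  unfolding eps_xi_def by (rule Sup_upper) simp

lemma profile_nonneg: "0 \<le> profile TYPE('a::metric_space) p S"
  unfolding profile_def by (rule Inf_greatest) (auto intro: eps_nonneg)

theorem proposition2p1p7:
  assumes "uniformly_discrete TYPE('a::metric_space)"
    and "bounded_geometry TYPE('a)"
    and "property_A TYPE('a)"
  shows "(INF S\<in>{0<..}. profile TYPE('a) 1 S) = 0"
proof (rule antisym)
  obtain r where r: "r > 0" "\<And>x y::'a. dist x y < r \<Longrightarrow> x = y"
    using assms(1) unfolding uniformly_discrete_def by blast
  show "(INF S\<in>{0<..}. profile TYPE('a) 1 S) \<le> 0"
  proof (rule ereal_le_epsilon2)
    fix d :: real assume d: "0 < d"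
    define R where "R = 2 / d"
    have R: "R > 0" using d by (simp add: R_def)
    obtain \<xi> :: "'a \<Rightarrow> 'a \<Rightarrow> real" and S where
      xs: "\<And>x. \<xi> x \<in> lp_sphere 1" and sw: "support_within \<xi> S"
      and cl: "\<And>x y. dist x y \<le> R \<Longrightarrow> lp_norm 1 (\<lambda>z. \<xi> x z - \<xi> y z) \<le> d * r"
      using assms(3)[unfolded property_A_def, rule_format, OF R mult_pos_pos[OF d r(1)]]
      by blast
    define S' where "S' = max S 1"
    have sw': "support_within \<xi> S'" using sw support_mono S'_def by force
    have "eps_xi 1 \<xi> \<le> ereal d"
      unfolding eps_xi_def
    proof (rule Sup_least)
      fix u assume "u \<in> insert 0 {ereal (lp_norm 1 (\<lambda>z. \<xi> x z - \<xi> y z) / dist x y) | x y. x \<noteq> y}"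
      then consider "u = 0" | x y where "x \<noteq> y" "u = ereal (lp_norm 1 (\<lambda>z. \<xi> x z - \<xi> y z) / dist x y)"
        by blast
      then show "u \<le> ereal d"
      proof cases
        case 1 then show ?thesis using d by simp
      next
        case 2
        have dp: "dist x y \<ge> r" using r(2)[of x y] 2(1) by force
        have dpos: "dist x y > 0" using 2(1) by simp
        have nn: "0 \<le> lp_norm 1 (\<lambda>z. \<xi> x z - \<xi> y z)" by (simp add: lp1_eq infsum_nonneg)
        have "lp_norm 1 (\<lambda>z. \<xi> x z - \<xi> y z) / dist x y \<le> d"
        proof (cases "dist x y \<le> R")
          case True
          have "lp_norm 1 (\<lambda>z. \<xi> x z - \<xi> y z) \<le> d * dist x y"
            using cl[OF True] mult_left_mono[OF dp less_imp_le[OF d]] by linarith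
          then show ?thesis using dpos by (simp add: divide_le_eq)
        next
          case False
          have "lp_norm 1 (\<lambda>z. \<xi> x z - \<xi> y z) \<le> d * dist x y"
          proof -
            have "d * dist x y \<ge> d * R" using False d by simp
            moreover have "d * R = 2" using d by (simp add: R_def)
            ultimately show ?thesis using diff_le2[OF xs xs, of x y] by linarith
          qed
          then show ?thesis using dpos by (simp add: divide_le_eq)
        qed
        then show ?thesis using 2(2) by simp
      qed
    qed
    moreover have "profile TYPE('a) 1 S' \<le> eps_xi 1 \<xi>"
      unfolding profile_def by (rule Inf_lower) (use xs sw' in blast)
    moreover have "(INF S\<in>{0<..}. profile TYPE('a) 1 S) \<le> profile TYPE('a) 1 S'"
      by (rule INF_lower) (simp add: S'_def)
    ultimately show "(INF S\<in>{0<..}. profile TYPE('a) 1 S) \<le> 0 + ereal d" by simp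
  qed
  show "0 \<le> (INF S\<in>{0<..}. profile TYPE('a) 1 S)"
    by (rule INF_greatest) (rule profile_nonneg)
qed

end
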